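(* Let $S$ be an additively reduced semidomain and $G$ a torsion-free abelian group. Let $f=\sum_{i=0}^n s_ix^{g_i}\in S[G]$ (with $g_0>g_1>\dots>g_n$ and $s_i\in S\setminus\{0\}$) satisfy $|\operatorname{supp}(f)|>1$. Then $f$ is irreducible if and only if $f$ is monolithic and $1\in\gcd(\{s_0,s_1,\dots,s_n\})$.
   Context: A semidomain is a subsemiring (containing $0$ and $1$) of an integral domain; all semirings are commutative. $S$ is additively reduced if $0$ is the only invertible element of $(S,+)$; $S^\times$ is the unit group of the multiplicative monoid $S\setminus\{0\}$. $G$ carries a fixed total order compatible with addition. $S[G]$ is the semidomain of formal finite sums $\sum_{g\in G}s_gx^g$ with polynomial operations; $\operatorname{supp}(f)$ is the set of exponents with nonzero coefficient. $f$ is irreducible if it is nonzero, a nonunit of $S[G]$, and $f=pq$ implies $p$ or $q$ is a unit. A nonzero $f\in S[G]$ is monolithic if whenever $f=pq$ with $p,q\in S[G]$, one of $p,q$ is a monomial $sx^g$. For $B\subseteq S\setminus\{0\}$, $\gcd(B)$ is the set of greatest common divisors of $B$ in the multiplicative monoid $S\setminus\{0\}$; thus $1\in\gcd(B)$ means every common divisor of all elements of $B$ is a unit of $S$. *)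

theory Defs
  imports "HOL-Library.Poly_Mapping"
begin

definition semidomain :: "'a::idom set \<Rightarrow> bool" where
  "semidomain S \<longleftrightarrow> 0 \<in> S \<and> 1 \<in> S \<and> (\<forall>a\<in>S. \<forall>b\<in>S. a + b \<in> S \<and> a * b \<in> S)"

definition add_reduced :: "'a::idom set \<Rightarrow> bool" where
  "add_reduced S \<longleftrightarrow> (\<forall>a\<in>S. (\<exists>b\<in>S. a + b = 0) \<longrightarrow> a = 0)"

text \<open>The monoid semidomain S[G], as finitely supported maps G \<rightarrow> S
  inside the monoid ring over the ambient domain (convolution product).\<close>
definition monoid_semiring :: "'a::idom set \<Rightarrow> ('g::comm_monoid_add \<Rightarrow>\<^sub>0 'a) set" where
  "monoid_semiring S = {f. \<forall>g. Poly_Mapping.lookup f g \<in> S}"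

definition unit_in :: "'b::{times,one} set \<Rightarrow> 'b \<Rightarrow> bool" where
  "unit_in R x \<longleftrightarrow> x \<in> R \<and> (\<exists>y\<in>R. x * y = 1)"

definition irreducible_in :: "'b::{times,one,zero} set \<Rightarrow> 'b \<Rightarrow> bool" where
  "irreducible_in R f \<longleftrightarrow> f \<in> R \<and> f \<noteq> 0 \<and> \<not> unit_in R f \<and>
     (\<forall>p\<in>R. \<forall>q\<in>R. f = p * q \<longrightarrow> unit_in R p \<or> unit_in R q)"

definition is_monomial :: "('g \<Rightarrow>\<^sub>0 'a::zero) \<Rightarrow> bool" where
  "is_monomial p \<longleftrightarrow> (\<exists>s g. p = Poly_Mapping.single g s)"

definition monolithic :: "'a::idom set \<Rightarrow> ('g::comm_monoid_add \<Rightarrow>\<^sub>0 'a) \<Rightarrow> bool" where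
  "monolithic S f \<longleftrightarrow> f \<noteq> 0 \<and>
     (\<forall>p\<in>monoid_semiring S. \<forall>q\<in>monoid_semiring S. f = p * q \<longrightarrow> is_monomial p \<or> is_monomial q)"

text \<open>1 \<in> gcd(B) in the multiplicative monoid S\<setminus>{0}: every common divisor
  of all elements of B is a unit of S.\<close>
definition one_in_gcd :: "'a::idom set \<Rightarrow> 'a set \<Rightarrow> bool" where
  "one_in_gcd S B \<longleftrightarrow>
     (\<forall>d\<in>S - {0}. (\<forall>b\<in>B. \<exists>t\<in>S - {0}. b = d * t) \<longrightarrow> unit_in S d)"

end

theory Submission imports Defs begin

lemma sum_in_S:
  assumes "semidomain S" "\<And>x. x \<in> A \<Longrightarrow> f x \<in> S"
  shows "sum f A \<in> S"
  using assms(2)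
proof (induction A rule: infinite_finite_induct)
  case (infinite A) then show ?case using assms(1) by (simp add: semidomain_def)
next
  case empty then show ?case using assms(1) by (simp add: semidomain_def)
next
  case (insert x F) then show ?case using assms(1) by (simp add: semidomain_def)
qed

lemma lookup_mult_sum:
  fixes p q :: "'g::comm_monoid_add \<Rightarrow>\<^sub>0 'a::idom"
  shows "Poly_Mapping.lookup (p*q) k = (\<Sum>(x,y)\<in>Poly_Mapping.keys p \<times> Poly_Mapping.keys q. Poly_Mapping.lookup p x * Poly_Mapping.lookup q y when k = x + y)"
proof -
  have "Poly_Mapping.lookup (p*q) k = prod_fun (Poly_Mapping.lookup p) (Poly_Mapping.lookup q) k" by (simp add: lookup_mult prod_fun_def)
  also have "\<dots> = (\<Sum>(a, b). Poly_Mapping.lookup p a * Poly_Mapping.lookup q b when k = a + b)"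
    by (rule prod_fun_unfold_prod) (auto simp: in_keys_iff[symmetric])
  also have "\<dots> = (\<Sum>(x,y)\<in>Poly_Mapping.keys p \<times> Poly_Mapping.keys q. Poly_Mapping.lookup p x * Poly_Mapping.lookup q y when k = x + y)"
    by (rule Sum_any.expand_superset) (auto simp: in_keys_iff)
  finally show ?thesis .
qed

lemma keys_mult_sup:
  fixes p q :: "'g::comm_monoid_add \<Rightarrow>\<^sub>0 'a::idom"
  assumes S: "semidomain (S::'a set)" "add_reduced S" and p: "p \<in> monoid_semiring S" and q: "q \<in> monoid_semiring S"
    and a: "a \<in> Poly_Mapping.keys p" and b: "b \<in> Poly_Mapping.keys q"
  shows "a + b \<in> Poly_Mapping.keys (p*q)"
proof -
  let ?h = "\<lambda>(x,y). Poly_Mapping.lookup p x * Poly_Mapping.lookup q y when a + b = x + y"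
  let ?A = "Poly_Mapping.keys p \<times> Poly_Mapping.keys q"
  have inS: "?h z \<in> S" for z
  proof (cases z)
    case (Pair x y)
    have "Poly_Mapping.lookup p x \<in> S" "Poly_Mapping.lookup q y \<in> S"
      using p q by (simp_all add: monoid_semiring_def)
    then have "Poly_Mapping.lookup p x * Poly_Mapping.lookup q y \<in> S" "(0::'a) \<in> S"
      using S(1) unfolding semidomain_def by blast+
    then show ?thesis by (simp add: Pair when_def)
  qed
  have "sum ?h ?A = ?h (a,b) + sum ?h (?A - {(a,b)})"
    by (rule sum.remove) (use a b in auto)
  moreover have "sum ?h (?A - {(a,b)}) \<in> S" by (rule sum_in_S[OF S(1)]) (rule inS)
  moreover have "?h (a,b) \<noteq> 0" using a b by (simp only: in_keys_iff when_def prod.case if_True mult_eq_0_iff de_Morgan_disj simp_thms)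
  moreover have "?h (a,b) \<in> S" by (rule inS)
  ultimately have "sum ?h ?A \<noteq> 0"
  proof (intro notI)
    assume h1: "sum ?h ?A = ?h (a,b) + sum ?h (?A - {(a,b)})" and h2: "sum ?h (?A - {(a,b)}) \<in> S"
      and h3: "?h (a,b) \<noteq> 0" and h4: "?h (a,b) \<in> S" and h5: "sum ?h ?A = 0"
    have "\<forall>u\<in>S. (\<exists>v\<in>S. u + v = 0) \<longrightarrow> u = 0" using S(2) by (simp add: add_reduced_def)
    moreover have "?h (a,b) + sum ?h (?A - {(a,b)}) = 0" using h1 h5 by (simp only:)
    ultimately have "?h (a,b) = 0" using h2 h4 by blast
    then show False using h3 by simp
  qed
  then have "Poly_Mapping.lookup (p*q) (a+b) \<noteq> 0" using lookup_mult_sum[of p q "a+b"] by (simp add: split_def)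
  then show ?thesis by (simp add: in_keys_iff)
qed

lemma unit_card:
  fixes p :: "'g::ab_group_add \<Rightarrow>\<^sub>0 'a::idom"
  assumes S: "semidomain (S::'a set)" "add_reduced S" and u: "unit_in (monoid_semiring S) p"
  shows "card (Poly_Mapping.keys p) \<le> 1"
proof -
  obtain q where q: "q \<in> monoid_semiring S" "p * q = 1" using u by (auto simp: unit_in_def)
  have p: "p \<in> monoid_semiring S" using u by (auto simp: unit_in_def)
  have "q \<noteq> 0"
  proof
    assume "q = 0"
    then have "Poly_Mapping.lookup (p * q) 0 = 0" by simp
    then show False using q(2) by simp
  qed
  then have "Poly_Mapping.keys q \<noteq> {}" by simp
  then obtain b where b: "b \<in> Poly_Mapping.keys q" by blast
  have k1: "Poly_Mapping.keys (1::'g \<Rightarrow>\<^sub>0 'a) = {0}" by (rule keys_one)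
  have "Poly_Mapping.keys p \<subseteq> {-b}"
  proof
    fix a assume "a \<in> Poly_Mapping.keys p"
    then have "a + b \<in> Poly_Mapping.keys (p*q)" using keys_mult_sup[OF S p q(1) _ b] by blast
    then have "a + b = 0" using q(2) k1 by simp
    then show "a \<in> {-b}" by (simp add: eq_neg_iff_add_eq_0)
  qed
  then have "card (Poly_Mapping.keys p) \<le> card {-b}" by (intro card_mono) auto
  then show ?thesis by simp
qed

lemma single_mult_lookup:
  fixes q :: "'g::ab_group_add \<Rightarrow>\<^sub>0 'a::idom"
  shows "Poly_Mapping.lookup (Poly_Mapping.single g s * q) h = s * Poly_Mapping.lookup q (h - g)"
proof -
  have "Poly_Mapping.lookup (Poly_Mapping.single g s * q) h = (\<Sum>l. (s when g = l) * (\<Sum>q'. Poly_Mapping.lookup q q' when h = l + q'))"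
    by (simp add: lookup_mult lookup_single)
  also have "\<dots> = s * (\<Sum>q'. Poly_Mapping.lookup q q' when h = g + q')"
  proof -
    have e: "(\<lambda>l. (s when g = l) * (\<Sum>q'. Poly_Mapping.lookup q q' when h = l + q')) =
       (\<lambda>l. if g = l then s * (\<Sum>q'. Poly_Mapping.lookup q q' when h = g + q') else 0)"
      by (auto simp: when_def)
    show ?thesis by (simp only: e Sum_any.delta')
  qed
  also have "(\<Sum>q'. Poly_Mapping.lookup q q' when h = g + q') = Poly_Mapping.lookup q (h - g)"
  proof -
    have e2: "(\<lambda>q'. Poly_Mapping.lookup q q' when h = g + q') = (\<lambda>q'. Poly_Mapping.lookup q q' when q' = h - g)"
      by (auto simp: when_def algebra_simps)
    show ?thesis unfolding e2 by (simp add: when_def)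
  qed
  finally show ?thesis .
qed


lemma card_le1_monomial:
  fixes p :: "'g::zero \<Rightarrow>\<^sub>0 'a::zero"
  assumes "card (Poly_Mapping.keys p) \<le> 1"
  shows "is_monomial p"
proof (cases "Poly_Mapping.keys p = {}")
  case True
  then have "p = Poly_Mapping.single 0 0" by simp
  then show ?thesis unfolding is_monomial_def by blast
next
  case False
  then have "card (Poly_Mapping.keys p) \<noteq> 0" by simp
  then have "card (Poly_Mapping.keys p) = 1" using assms by linarith
  then obtain g where g: "Poly_Mapping.keys p = {g}" by (rule card_1_singletonE)
  have "p = Poly_Mapping.single g (Poly_Mapping.lookup p g)"
  proof (rule poly_mapping_eqI)
    fix k show "Poly_Mapping.lookup p k = Poly_Mapping.lookup (Poly_Mapping.single g (Poly_Mapping.lookup p g)) k"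
    proof (cases "k = g")
      case True then show ?thesis by simp
    next
      case False
      then have "k \<notin> Poly_Mapping.keys p" using g by simp
      then have "Poly_Mapping.lookup p k = 0" by (simp add: in_keys_iff)
      with False show ?thesis by (simp add: lookup_single when_def)
    qed
  qed
  then show ?thesis unfolding is_monomial_def by blast
qed

lemma single_in_R:
  assumes "semidomain S" "s \<in> S"
  shows "Poly_Mapping.single g s \<in> monoid_semiring S"
proof -
  have "0 \<in> S" using assms(1) unfolding semidomain_def by blast
  then show ?thesis using assms(2) by (simp add: monoid_semiring_def lookup_single when_def)
qed

lemma mono_unit:
  fixes f q :: "'g::ab_group_add \<Rightarrow>\<^sub>0 'a::idom"
  assumes S: "semidomain S" and gcd: "one_in_gcd S (Poly_Mapping.lookup f ` Poly_Mapping.keys f)"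
    and fq: "f = Poly_Mapping.single g s * q" and p: "Poly_Mapping.single g s \<in> monoid_semiring S"
    and q: "q \<in> monoid_semiring S" and f0: "f \<noteq> 0"
  shows "unit_in (monoid_semiring S) (Poly_Mapping.single g s)"
proof -
  have "\<forall>x. Poly_Mapping.lookup (Poly_Mapping.single g s) x \<in> S" using p by (simp add: monoid_semiring_def)
  then have "Poly_Mapping.lookup (Poly_Mapping.single g s) g \<in> S" by blast
  then have sS: "s \<in> S" by simp
  have s0: "s \<noteq> 0" using f0 fq by auto
  have "\<forall>b\<in>Poly_Mapping.lookup f ` Poly_Mapping.keys f. \<exists>t\<in>S - {0}. b = s * t"
  proof
    fix b assume "b \<in> Poly_Mapping.lookup f ` Poly_Mapping.keys f"
    then obtain h where h: "h \<in> Poly_Mapping.keys f" "b = Poly_Mapping.lookup f h" by blast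
    have "b = s * Poly_Mapping.lookup q (h - g)" unfolding h(2) fq by (rule single_mult_lookup)
    moreover have "Poly_Mapping.lookup q (h - g) \<in> S" using q by (simp add: monoid_semiring_def)
    moreover have "b \<noteq> 0" using h by (simp add: in_keys_iff)
    ultimately show "\<exists>t\<in>S - {0}. b = s * t" by auto
  qed
  then have "unit_in S s" using gcd sS s0 unfolding one_in_gcd_def by blast
  then obtain u where u: "u \<in> S" "s * u = 1" by (auto simp: unit_in_def)
  have "Poly_Mapping.single g s * Poly_Mapping.single (-g) u = 1"
    using u by (simp add: mult_single)
  then show ?thesis using p single_in_R[OF S u(1)] unfolding unit_in_def by blast
qed

theorem lemma3p1:
  fixes S :: "'a::idom set" and f :: "'g::linordered_ab_group_add \<Rightarrow>\<^sub>0 'a"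
  assumes "semidomain S" and "add_reduced S"
    and "f \<in> monoid_semiring S"
    and "card (Poly_Mapping.keys f) > 1"
  shows "irreducible_in (monoid_semiring S) f \<longleftrightarrow>
           monolithic S f \<and> one_in_gcd S (Poly_Mapping.lookup f ` Poly_Mapping.keys f)"
proof
  assume irr: "irreducible_in (monoid_semiring S) f"
  have f0: "f \<noteq> 0" using irr by (simp add: irreducible_in_def)
  have mono: "monolithic S f"
    unfolding monolithic_def
  proof (intro conjI f0 ballI impI)
    fix p q assume pq: "p \<in> monoid_semiring S" "q \<in> monoid_semiring S" "f = p * q"
    then have "unit_in (monoid_semiring S) p \<or> unit_in (monoid_semiring S) q"
      using irr by (simp add: irreducible_in_def)
    then show "is_monomial p \<or> is_monomial q"
      using unit_card[OF assms(1,2)] card_le1_monomial by blast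
  qed
  have gcd: "one_in_gcd S (Poly_Mapping.lookup f ` Poly_Mapping.keys f)"
    unfolding one_in_gcd_def
  proof (intro ballI impI)
    fix d assume d: "d \<in> S - {0}"
      and H: "\<forall>b\<in>Poly_Mapping.lookup f ` Poly_Mapping.keys f. \<exists>t\<in>S - {0}. b = d * t"
    define T where "T h = (SOME t. t \<in> S - {0} \<and> Poly_Mapping.lookup f h = d * t)" for h
    have T: "T h \<in> S - {0} \<and> Poly_Mapping.lookup f h = d * T h" if "h \<in> Poly_Mapping.keys f" for h
      unfolding T_def by (rule someI_ex) (use H that in blast)
    define F where "F h = (if h \<in> Poly_Mapping.keys f then T h else 0)" for h
    define f' where "f' = Abs_poly_mapping F"
    have finF: "finite {h. F h \<noteq> 0}"
      by (rule finite_subset[of _ "Poly_Mapping.keys f"]) (auto simp: F_def)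
    have lf': "Poly_Mapping.lookup f' = F"
      unfolding f'_def using finF by (simp add: Abs_poly_mapping_inverse)
    have S0: "0 \<in> S" using assms(1) unfolding semidomain_def by blast
    have f'R: "f' \<in> monoid_semiring S"
      unfolding monoid_semiring_def
    proof (simp only: mem_Collect_eq lf', intro allI)
      fix h show "F h \<in> S" using T[of h] S0 by (cases "h \<in> Poly_Mapping.keys f") (simp_all add: F_def)
    qed
    have kf': "Poly_Mapping.keys f' = Poly_Mapping.keys f"
    proof (rule set_eqI)
      fix h
      have "h \<in> Poly_Mapping.keys f' \<longleftrightarrow> F h \<noteq> 0" by (simp add: in_keys_iff lf')
      also have "\<dots> \<longleftrightarrow> h \<in> Poly_Mapping.keys f" using T[of h] by (cases "h \<in> Poly_Mapping.keys f") (simp_all add: F_def)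
      finally show "h \<in> Poly_Mapping.keys f' \<longleftrightarrow> h \<in> Poly_Mapping.keys f" .
    qed
    have dR: "Poly_Mapping.single 0 d \<in> monoid_semiring S" using single_in_R[OF assms(1)] d by blast
    have fe: "f = Poly_Mapping.single 0 d * f'"
    proof (rule poly_mapping_eqI)
      fix h show "Poly_Mapping.lookup f h = Poly_Mapping.lookup (Poly_Mapping.single 0 d * f') h"
      proof (cases "h \<in> Poly_Mapping.keys f")
        case True
        then show ?thesis using T[of h] by (simp add: single_mult_lookup lf' F_def)
      next
        case False
        then have "Poly_Mapping.lookup f h = 0" by (simp add: in_keys_iff)
        then show ?thesis using False by (simp add: single_mult_lookup lf' F_def)
      qed
    qed
    have "unit_in (monoid_semiring S) (Poly_Mapping.single (0::'g) d) \<or> unit_in (monoid_semiring S) f'"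
    proof -
      have "\<forall>p\<in>monoid_semiring S. \<forall>q\<in>monoid_semiring S. f = p * q \<longrightarrow>
          unit_in (monoid_semiring S) p \<or> unit_in (monoid_semiring S) q"
        using irr unfolding irreducible_in_def by blast
      from this[rule_format, OF dR f'R fe] show ?thesis .
    qed
    moreover have "\<not> unit_in (monoid_semiring S) f'"
    proof
      assume "unit_in (monoid_semiring S) f'"
      then have "card (Poly_Mapping.keys f') \<le> 1" by (rule unit_card[OF assms(1,2)])
      with kf' assms(4) show False by simp
    qed
    ultimately obtain y where y: "y \<in> monoid_semiring S" "Poly_Mapping.single (0::'g) d * y = 1"
      by (auto simp: unit_in_def)
    have "d * Poly_Mapping.lookup y 0 = 1"
      using arg_cong[OF y(2), of "\<lambda>p. Poly_Mapping.lookup p 0"] by (simp add: single_mult_lookup)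
    moreover have "Poly_Mapping.lookup y 0 \<in> S" using y(1) by (simp add: monoid_semiring_def)
    ultimately show "unit_in S d" using d by (auto simp: unit_in_def)
  qed
  show "monolithic S f \<and> one_in_gcd S (Poly_Mapping.lookup f ` Poly_Mapping.keys f)"
    using mono gcd by blast
next
  assume "monolithic S f \<and> one_in_gcd S (Poly_Mapping.lookup f ` Poly_Mapping.keys f)"
  then have mono: "monolithic S f" and gcd: "one_in_gcd S (Poly_Mapping.lookup f ` Poly_Mapping.keys f)"
    by auto
  have f0: "f \<noteq> 0" using mono by (simp add: monolithic_def)
  have nu: "\<not> unit_in (monoid_semiring S) f"
  proof
    assume "unit_in (monoid_semiring S) f"
    then have "card (Poly_Mapping.keys f) \<le> 1" by (rule unit_card[OF assms(1,2)])
    with assms(4) show False by simp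
  qed
  show "irreducible_in (monoid_semiring S) f"
    unfolding irreducible_in_def
  proof (intro conjI assms(3) f0 nu ballI impI)
    fix p q assume pq: "p \<in> monoid_semiring S" "q \<in> monoid_semiring S" "f = p * q"
    then have "is_monomial p \<or> is_monomial q" using mono by (simp add: monolithic_def)
    then show "unit_in (monoid_semiring S) p \<or> unit_in (monoid_semiring S) q"
    proof
      assume "is_monomial p"
      then obtain s g where pe: "p = Poly_Mapping.single g s" by (auto simp: is_monomial_def)
      have "unit_in (monoid_semiring S) (Poly_Mapping.single g s)"
        by (rule mono_unit[OF assms(1) gcd _ _ pq(2) f0]) (use pq pe in simp_all)
      then show ?thesis using pe by simp
    next
      assume "is_monomial q"
      then obtain s g where qe: "q = Poly_Mapping.single g s" by (auto simp: is_monomial_def)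
      have "f = q * p" using pq by (simp add: mult.commute)
      then have "unit_in (monoid_semiring S) (Poly_Mapping.single g s)"
        by (intro mono_unit[OF assms(1) gcd _ _ pq(1) f0]) (use pq qe in simp_all)
      then show ?thesis using qe by simp
    qed
  qed
qed

end
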